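(* Let $X$ and $Y$ be Tychonoff spaces and let $f\colon X\to Y$ be a quotient map of $X$ onto $Y$. If $X$ is a weakly Grothendieck space, then $Y$ is a weakly Grothendieck space.
   Context: For a Tychonoff space $X$, $C_p(X)$ denotes the space of all continuous real-valued functions on $X$ with the topology of pointwise convergence. A subset $A$ of a space $Z$ is countably compact in $Z$ if every infinite subset of $A$ has an accumulation point in $Z$. A space $Z$ is a $g$-space if for every subset $A\subseteq Z$ that is countably compact in $Z$, the closure of $A$ in $Z$ is compact. A Tychonoff space $X$ is weakly Grothendieck if $C_p(X)$ is a $g$-space, and Grothendieck if every subspace of $C_p(X)$ is a $g$-space. *)

theory Defs
  imports "HOL-Analysis.Analysis"
begin

definition tychonoff_space :: "'a topology \<Rightarrow> bool" where
  "tychonoff_space X \<longleftrightarrow> completely_regular_space X \<and> t1_space X"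

text \<open>C_p(X): continuous real functions on X (restricted to topspace X, extensional)
  with the topology of pointwise convergence, i.e. as a subspace of the product R^X.\<close>
definition Cp :: "'a topology \<Rightarrow> ('a \<Rightarrow> real) topology" where
  "Cp X = subtopology (product_topology (\<lambda>_. euclideanreal) (topspace X))
            {f. continuous_map X euclideanreal f \<and> f \<in> extensional (topspace X)}"

definition countably_compact_in :: "'b topology \<Rightarrow> 'b set \<Rightarrow> bool" where
  "countably_compact_in Z A \<longleftrightarrow> A \<subseteq> topspace Z \<and>
     (\<forall>B. B \<subseteq> A \<and> infinite B \<longrightarrow> Z derived_set_of B \<noteq> {})"

definition g_space :: "'b topology \<Rightarrow> bool" where
  "g_space Z \<longleftrightarrow> (\<forall>A. countably_compact_in Z A \<longrightarrow> compactin Z (Z closure_of A))"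

definition weakly_grothendieck :: "'a topology \<Rightarrow> bool" where
  "weakly_grothendieck X \<longleftrightarrow> tychonoff_space X \<and> g_space (Cp X)"

end

theory Submission
  imports Defs
begin

lemma topspace_Cp:
  "topspace (Cp X) = {g. continuous_map X euclideanreal g \<and> g \<in> extensional (topspace X)}"
  unfolding Cp_def by (auto simp: PiE_iff extensional_def)

lemma eval_cont_Cp:
  assumes "x \<in> topspace X"
  shows "continuous_map (Cp X) euclideanreal (\<lambda>g. g x)"
  unfolding Cp_def
  by (rule continuous_map_from_subtopology, rule continuous_map_product_projection[OF assms, of "\<lambda>_. euclideanreal", simplified])

lemma cont_into_Cp:
  assumes "\<And>z. z \<in> topspace Z \<Longrightarrow> F z \<in> topspace (Cp X)"
    and "\<And>x. x \<in> topspace X \<Longrightarrow> continuous_map Z euclideanreal (\<lambda>z. F z x)"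
  shows "continuous_map Z (Cp X) F"
proof -
  have "continuous_map Z (product_topology (\<lambda>_. euclideanreal) (topspace X)) F"
    unfolding continuous_map_componentwise using assms by (auto simp: topspace_Cp)
  then show ?thesis unfolding Cp_def continuous_map_in_subtopology
    using assms(1) by (auto simp: topspace_Cp)
qed

lemma Hausdorff_Cp: "Hausdorff_space (Cp X)"
  unfolding Cp_def
  by (intro Hausdorff_space_subtopology) (simp add: Hausdorff_space_product_topology)

lemma closed_image:
  fixes f :: "'a \<Rightarrow> 'b"
  assumes q: "quotient_map X Y f"
  shows "closedin (Cp X) ((\<lambda>g. restrict (g \<circ> f) (topspace X)) ` topspace (Cp Y))"
proof -
  let ?F = "\<lambda>g. restrict (g \<circ> f) (topspace X)"
  let ?P = "{(x,x'). x \<in> topspace X \<and> x' \<in> topspace X \<and> f x = f x'}"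
  let ?S = "{h \<in> topspace (Cp X). \<forall>x\<in>topspace X. \<forall>x'\<in>topspace X. f x = f x' \<longrightarrow> h x = h x'}"
  have eq: "?F ` topspace (Cp Y) = ?S"
  proof
    show "?F ` topspace (Cp Y) \<subseteq> ?S"
    proof
      fix h assume "h \<in> ?F ` topspace (Cp Y)"
      then obtain g where g: "g \<in> topspace (Cp Y)" "h = ?F g" by auto
      have "continuous_map X euclideanreal (g \<circ> f)"
        using g(1) quotient_imp_continuous_map[OF q] continuous_map_compose
        by (auto simp: topspace_Cp)
      then have "continuous_map X euclideanreal h"
        by (rule continuous_map_eq) (simp add: g(2))
      then show "h \<in> ?S" using g(2) by (auto simp: topspace_Cp)
    qed
    show "?S \<subseteq> ?F ` topspace (Cp Y)"
    proof
      fix h assume h: "h \<in> ?S"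
      then have hc: "continuous_map X euclideanreal h" and he: "h \<in> extensional (topspace X)"
        by (auto simp: topspace_Cp)
      have hf: "\<And>x y. x \<in> topspace X \<Longrightarrow> y \<in> topspace X \<Longrightarrow> f x = f y \<Longrightarrow> h x = h y"
        using h by blast
      obtain g where g: "continuous_map Y euclideanreal g" and "g ` topspace Y = h ` topspace X"
          and gf: "\<And>x. x \<in> topspace X \<Longrightarrow> g (f x) = h x"
      proof (rule quotient_map_lift_exists[OF q hc])
        fix x y assume "x \<in> topspace X" "y \<in> topspace X" "f x = f y"
        then show "h x = h y" by (rule hf)
      next
        fix g assume "continuous_map Y euclideanreal g" "g ` topspace Y = h ` topspace X"
          "\<And>x. x \<in> topspace X \<Longrightarrow> g (f x) = h x"
        then show thesis by (rule that)
      qed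
      let ?g = "restrict g (topspace Y)"
      have "continuous_map Y euclideanreal ?g"
        using g(1) by (rule continuous_map_eq) simp
      then have "?g \<in> topspace (Cp Y)"
        by (simp add: topspace_Cp)
      moreover have "?F ?g = h"
      proof
        fix x show "?F ?g x = h x"
          using gf he quotient_imp_continuous_map[OF q]
          by (cases "x \<in> topspace X") (auto simp: extensional_def continuous_map_def)
      qed
      ultimately show "h \<in> ?F ` topspace (Cp Y)" by force
    qed
  qed
  have "?S = topspace (Cp X) \<inter> \<Inter> ((\<lambda>(x,x'). {h \<in> topspace (Cp X). h x = h x'}) ` ?P)"
    by auto
  moreover have "closedin (Cp X) (topspace (Cp X) \<inter> \<Inter> ((\<lambda>(x,x'). {h \<in> topspace (Cp X). h x = h x'}) ` ?P))"
  proof (cases "?P = {}")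
    case True then show ?thesis unfolding True by simp
  next
    case False
    have "closedin (Cp X) (\<Inter> ((\<lambda>(x,x'). {h \<in> topspace (Cp X). h x = h x'}) ` ?P))"
    proof (rule closedin_INT)
      show "?P \<noteq> {}" by (rule False)
      fix p assume "p \<in> ?P"
      then obtain x x' where p: "p = (x,x')" "x \<in> topspace X" "x' \<in> topspace X" by blast
      have "closedin (Cp X) {h \<in> topspace (Cp X). h x = h x'}"
        by (rule closedin_continuous_maps_eq[OF _ eval_cont_Cp[OF p(2)] eval_cont_Cp[OF p(3)]]) simp
      then show "closedin (Cp X) ((\<lambda>(x,x'). {h \<in> topspace (Cp X). h x = h x'}) p)"
        using p(1) by simp
    qed
    then show ?thesis by (simp add: closedin_Int)
  qed
  ultimately show ?thesis using eq by simp
qed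

theorem lemma2:
  fixes X :: "'a topology" and Y :: "'b topology" and f :: "'a \<Rightarrow> 'b"
  assumes "tychonoff_space X" and "tychonoff_space Y"
    and "quotient_map X Y f"
    and "weakly_grothendieck X"
  shows "weakly_grothendieck Y"
proof -
  note q = assms(3)
  have gX: "g_space (Cp X)" using assms(4) by (simp add: weakly_grothendieck_def)
  have surj: "f ` topspace X = topspace Y" using quotient_imp_surjective_map[OF q] .
  have fc: "continuous_map X Y f" using quotient_imp_continuous_map[OF q] .
  define F where "F = (\<lambda>g::'b\<Rightarrow>real. restrict (g \<circ> f) (topspace X))"
  define c where "c = (\<lambda>y. SOME x. x \<in> topspace X \<and> f x = y)"
  define G where "G = (\<lambda>h::'a\<Rightarrow>real. restrict (\<lambda>y. h (c y)) (topspace Y))"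
  define S where "S = F ` topspace (Cp Y)"
  have c: "c y \<in> topspace X \<and> f (c y) = y" if "y \<in> topspace Y" for y
  proof -
    have "\<exists>x. x \<in> topspace X \<and> f x = y" by (metis that imageE surj)
    then show ?thesis unfolding c_def by (rule someI_ex)
  qed
  have Fmap: "F g \<in> topspace (Cp X)" if "g \<in> topspace (Cp Y)" for g
  proof -
    have "continuous_map X euclideanreal (g \<circ> f)"
      using that fc continuous_map_compose by (auto simp: topspace_Cp)
    then have "continuous_map X euclideanreal (F g)"
      by (rule continuous_map_eq) (simp add: F_def)
    then show ?thesis unfolding topspace_Cp by (simp add: F_def)
  qed
  have Fcont: "continuous_map (Cp Y) (Cp X) F"
  proof (rule cont_into_Cp)
    fix x assume x: "x \<in> topspace X"
    have "f x \<in> topspace Y" using fc x by (auto simp: continuous_map_def)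
    then show "continuous_map (Cp Y) euclideanreal (\<lambda>z. F z x)"
      using eval_cont_Cp[of "f x" Y] x by (simp add: F_def)
  qed (rule Fmap)
  have GF: "G (F g) = g" if "g \<in> topspace (Cp Y)" for g
  proof
    fix y show "G (F g) y = g y"
      using c[of y] that by (cases "y \<in> topspace Y") (auto simp: G_def F_def topspace_Cp extensional_def)
  qed
  have Finj: "g = g'" if "g \<in> topspace (Cp Y)" "g' \<in> topspace (Cp Y)" "F g = F g'" for g g'
    using GF that by metis
  have Gcont: "continuous_map (subtopology (Cp X) S) (Cp Y) G"
  proof (rule cont_into_Cp)
    fix z assume "z \<in> topspace (subtopology (Cp X) S)"
    then obtain g where "g \<in> topspace (Cp Y)" "z = F g" by (auto simp: S_def)
    then show "G z \<in> topspace (Cp Y)" using GF by simp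
  next
    fix y assume y: "y \<in> topspace Y"
    have "continuous_map (subtopology (Cp X) S) euclideanreal (\<lambda>h. h (c y))"
      by (rule continuous_map_from_subtopology, rule eval_cont_Cp) (use c[OF y] in auto)
    then show "continuous_map (subtopology (Cp X) S) euclideanreal (\<lambda>z. G z y)"
      using y by (simp add: G_def)
  qed
  have Sclosed: "closedin (Cp X) S" unfolding S_def F_def by (rule closed_image[OF q])
  have "g_space (Cp Y)"
    unfolding g_space_def
  proof (intro allI impI)
    fix A assume cc: "countably_compact_in (Cp Y) A"
    have Asub: "A \<subseteq> topspace (Cp Y)" using cc by (simp add: countably_compact_in_def)
    have FAsub: "F ` A \<subseteq> topspace (Cp X)" using Asub Fmap by auto
    have ccX: "countably_compact_in (Cp X) (F ` A)"
      unfolding countably_compact_in_def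
    proof (intro conjI allI impI)
      show "F ` A \<subseteq> topspace (Cp X)" by (rule FAsub)
      fix B assume B: "B \<subseteq> F ` A \<and> infinite B"
      define B' where "B' = {a\<in>A. F a \<in> B}"
      have FB': "F ` B' = B" using B by (auto simp: B'_def)
      have "infinite B'" using B FB' by auto
      moreover have "B' \<subseteq> A" by (auto simp: B'_def)
      ultimately have "Cp Y derived_set_of B' \<noteq> {}"
        using cc unfolding countably_compact_in_def by blast
      then obtain p where p: "p \<in> Cp Y derived_set_of B'" by blast
      have "F p \<in> Cp X derived_set_of B"
        unfolding derived_set_of_def
      proof (intro CollectI conjI allI impI)
        have pt: "p \<in> topspace (Cp Y)" using p by (simp add: derived_set_of_def)
        then show "F p \<in> topspace (Cp X)" by (rule Fmap)
        fix T assume T: "F p \<in> T \<and> openin (Cp X) T"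
        have op: "openin (Cp Y) {g \<in> topspace (Cp Y). F g \<in> T}"
          using T by (intro openin_continuous_map_preimage[OF Fcont]) simp
        have pin: "p \<in> {g \<in> topspace (Cp Y). F g \<in> T}" using pt T by simp
        have allT: "\<forall>T. p \<in> T \<and> openin (Cp Y) T \<longrightarrow> (\<exists>y\<noteq>p. y \<in> B' \<and> y \<in> T)"
          using CollectD[OF p[unfolded derived_set_of_def]] by (rule conjunct2)
        have "\<exists>y. y \<noteq> p \<and> y \<in> B' \<and> y \<in> {g \<in> topspace (Cp Y). F g \<in> T}"
          using allT[rule_format, OF conjI[OF pin op]] .
        then obtain y where y: "y \<noteq> p" "y \<in> B'" "y \<in> {g \<in> topspace (Cp Y). F g \<in> T}"
          by (elim exE conjE)
        then have "F y \<noteq> F p" using Finj pt by blast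
        then show "\<exists>y. y \<noteq> F p \<and> y \<in> B \<and> y \<in> T" using y FB' by blast
      qed
      then show "Cp X derived_set_of B \<noteq> {}" by blast
    qed
    define K where "K = Cp X closure_of (F ` A)"
    have Kc: "compactin (Cp X) K" using gX ccX by (simp add: g_space_def K_def)
    have KS: "K \<subseteq> S" unfolding K_def
      by (rule closure_of_minimal[OF _ Sclosed]) (use Asub in \<open>auto simp: S_def\<close>)
    have "compactin (subtopology (Cp X) S) K" using Kc KS by (simp add: compactin_subtopology)
    then have GK: "compactin (Cp Y) (G ` K)" using image_compactin Gcont by blast
    have "A \<subseteq> G ` K"
    proof
      fix a assume a: "a \<in> A"
      have "F a \<in> K" using closure_of_subset[OF FAsub] a by (auto simp: K_def)
      then show "a \<in> G ` K" using GF a Asub by (metis image_eqI subsetD)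
    qed
    moreover have "closedin (Cp Y) (G ` K)" using compactin_imp_closedin[OF Hausdorff_Cp GK] .
    ultimately have "Cp Y closure_of A \<subseteq> G ` K" by (rule closure_of_minimal)
    then show "compactin (Cp Y) (Cp Y closure_of A)"
      using closed_compactin[OF GK] by simp
  qed
  then show ?thesis using assms(2) by (simp add: weakly_grothendieck_def)
qed

end
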